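(* Let $n\ge1$, $q\in\{2,3,\ldots\}$, $\alpha>0$, $N>n$, and for $s\ge0$ let $\mu_q(s)$ be the unique positive solution of $N\mu^q-ns\mu^{q-1}-q\alpha^q=0$. Let $b=\mu_q(0)=\alpha(q/N)^{1/q}$ and $a=n/N=\lim_{s\to\infty}\mu_q(s)/s$. Then for every $s>0$, $$\mu_q(s)<b+as.$$ In particular, if an inverse Wishart MAP has eigenvalue map $s\mapsto \frac{ns+\alpha'}{n+m'+p+1}$ with the same floor $\alpha'/(n+m'+p+1)=b$ and the same shrinkage $n/(n+m'+p+1)=a$, then each nonzero-eigenvalue-direction eigenvalue of the power inverse Wishart MAP is strictly smaller than the corresponding eigenvalue of this inverse Wishart MAP.
   Context: For $\Psi=\alpha I$ the power inverse Wishart MAP covariance estimator (prior parameters $(\alpha I,m,q)$, $N=n+p+qm+1$) has the same eigenvectors as the sample covariance $S$, and an eigenvalue $s$ of $S$ is mapped to $\mu_q(s)$; the inverse Wishart MAP (prior parameters $(\alpha' I,m')$) is $\frac{1}{n+m'+p+1}(nS+\alpha' I)$. The floor of such an eigenvalue map is its value at $s=0$ and the shrinkage is its limit of (value)/$s$ as $s\to\infty$. *)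

theory Defs
  imports "HOL-Analysis.Analysis"
begin

definition mu_q :: "real \<Rightarrow> real \<Rightarrow> nat \<Rightarrow> real \<Rightarrow> real \<Rightarrow> real" where
  "mu_q N n q \<alpha> s =
     (THE \<mu>. \<mu> > 0 \<and> N * \<mu> ^ q - n * s * \<mu> ^ (q - 1) - real q * \<alpha> ^ q = 0)"

end

theory Submission
  imports Defs
begin

lemma gmono:
  fixes N K x y :: real and q :: nat
  assumes "K \<le> N*x" "x < y" "q \<ge> 2" "N > 0" "x > 0"
  shows "x^(q-1)*(N*x-K) < y^(q-1)*(N*y-K)"
proof -
  have "x^(q-1) \<le> y^(q-1)" using assms by (intro power_mono) auto
  hence "x^(q-1)*(N*x-K) \<le> y^(q-1)*(N*x-K)" using assms by (intro mult_right_mono) auto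
  also have "\<dots> < y^(q-1)*(N*y-K)" using assms by (intro mult_strict_left_mono) auto
  finally show ?thesis .
qed

lemma powsplit: "q \<ge> 1 \<Longrightarrow> (x::real)^q = x^(q-1)*x"
  by (metis Suc_diff_1 less_le_trans zero_less_one power_Suc2 le_less)

lemma key:
  fixes N K A b :: real and q :: nat
  assumes N: "N > 0" and K: "K > 0" and q: "q \<ge> 2" and b: "b > 0" and A: "N*b^q = A"
  shows "(THE \<mu>. \<mu> > 0 \<and> N * \<mu> ^ q - K * \<mu> ^ (q - 1) - A = 0) < b + K/N"
proof -
  define F where "F = (\<lambda>\<mu>::real. N * \<mu> ^ q - K * \<mu> ^ (q - 1) - A)"
  have Fg: "F \<mu> = \<mu>^(q-1)*(N*\<mu>-K) - A" for \<mu>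
    using powsplit[of q \<mu>] q unfolding F_def by (simp add: algebra_simps)
  define c where "c = b + K/N"
  have cK: "K < N*c" using N b by (simp add: c_def field_simps)
  have cb: "c > b" using K N b by (simp add: c_def)
  have Fc: "F c > 0"
  proof -
    have "N*c - K = N*b" using N by (simp add: c_def field_simps)
    hence "F c = c^(q-1)*(N*b) - A" by (simp add: Fg)
    moreover have "b^(q-1) < c^(q-1)" using cb b q by (intro power_strict_mono) auto
    moreover have "A = b^(q-1)*(N*b)" using A powsplit[of q b] q by (simp add: algebra_simps)
    moreover have "N*b*b^(q-1) < N*b*c^(q-1)" using N b \<open>b^(q-1) < c^(q-1)\<close> by simp
    ultimately show ?thesis by (simp add: algebra_simps)
  qed
  have Apos: "A > 0" using A N b by (metis mult_pos_pos zero_less_power)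
  have F0: "F 0 < 0" using q Apos unfolding F_def by (simp add: power_0_left)
  have pos_big: "K < N*\<mu>" if "\<mu> > 0" "F \<mu> = 0" for \<mu>
  proof (rule ccontr)
    assume "\<not> K < N*\<mu>"
    hence "\<mu>^(q-1)*(N*\<mu>-K) \<le> 0" using that by (intro mult_nonneg_nonpos) auto
    thus False using that Apos by (simp add: Fg)
  qed
  have uniq: "\<mu>1 = \<mu>2" if "\<mu>1 > 0" "F \<mu>1 = 0" "\<mu>2 > 0" "F \<mu>2 = 0" for \<mu>1 \<mu>2
  proof (rule ccontr)
    assume "\<mu>1 \<noteq> \<mu>2"
    then consider "\<mu>1 < \<mu>2" | "\<mu>2 < \<mu>1" by linarith
    thus False
    proof cases
      case 1 thus False using gmono[of K N \<mu>1 \<mu>2 q] pos_big[of \<mu>1] that q N by (simp add: Fg)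
    next
      case 2 thus False using gmono[of K N \<mu>2 \<mu>1 q] pos_big[of \<mu>2] that q N by (simp add: Fg)
    qed
  qed
  have cont: "\<forall>x. 0 \<le> x \<and> x \<le> c \<longrightarrow> isCont F x" unfolding F_def by (auto intro!: continuous_intros)
  obtain r where r: "0 \<le> r" "r \<le> c" "F r = 0"
    using IVT[of F 0 0 c, OF less_imp_le[OF F0] less_imp_le[OF Fc] _ cont] cb b by auto
  have rpos: "r > 0" using r F0 by (cases "r = 0") auto
  have "r \<noteq> c" using r Fc by auto
  hence rc: "r < c" using r by simp
  have "(THE \<mu>. \<mu> > 0 \<and> F \<mu> = 0) = r"
    using rpos r uniq by (intro the_equality) auto
  thus ?thesis using rc unfolding F_def c_def by simp
qed

theorem mainTheorem8:
  fixes n :: nat and q :: nat and \<alpha> N :: real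
  assumes "n \<ge> 1" and "q \<ge> 2" and "\<alpha> > 0" and "N > real n"
  shows "(\<forall>s::real. s > 0 \<longrightarrow>
            mu_q N (real n) q \<alpha> s < \<alpha> * (real q / N) powr (1 / real q) + (real n / N) * s)
       \<and> (\<forall>(\<alpha>'::real) (m'::real) (p::nat).
            real n + m' + real p + 1 > 0 \<longrightarrow>
            \<alpha>' / (real n + m' + real p + 1) = \<alpha> * (real q / N) powr (1 / real q) \<longrightarrow>
            real n / (real n + m' + real p + 1) = real n / N \<longrightarrow>
            (\<forall>s::real. s > 0 \<longrightarrow>
               mu_q N (real n) q \<alpha> s < (real n * s + \<alpha>') / (real n + m' + real p + 1)))"
proof -
  have N: "N > 0" using assms by linarith
  define b where "b = \<alpha> * (real q / N) powr (1 / real q)"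
  have bpos: "b > 0" using assms N by (simp add: b_def)
  have "b^q = \<alpha>^q * ((real q / N) powr (1 / real q))^q" by (simp add: b_def power_mult_distrib)
  also have "((real q / N) powr (1 / real q))^q = real q / N"
    using assms N by (simp add: powr_power)
  finally have bq: "N*b^q = real q * \<alpha>^q" using N by simp
  have P1: "mu_q N (real n) q \<alpha> s < b + (real n / N) * s" if "s > 0" for s
  proof -
    have "mu_q N (real n) q \<alpha> s < b + (real n * s)/N"
      unfolding mu_q_def using key[OF N _ assms(2) bpos bq, of "real n * s"] that assms(1) by simp
    thus ?thesis by simp
  qed
  show ?thesis unfolding b_def[symmetric]
  proof (intro conjI allI impI)
    fix s :: real assume "s > 0" thus "mu_q N (real n) q \<alpha> s < b + (real n / N) * s" using P1 by blast
  next
    fix \<alpha>' m' :: real and p :: nat and s :: real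
    assume D: "real n + m' + real p + 1 > 0"
      and h1: "\<alpha>' / (real n + m' + real p + 1) = b"
      and h2: "real n / (real n + m' + real p + 1) = real n / N" and s: "s > 0"
    have DN: "real n + m' + real p + 1 = N" using h2 assms D N by (simp add: field_simps)
    have "(real n * s + \<alpha>') / (real n + m' + real p + 1) = b + (real n / N) * s"
      using h1 DN N by (simp add: add_divide_distrib)
    thus "mu_q N (real n) q \<alpha> s < (real n * s + \<alpha>') / (real n + m' + real p + 1)"
      using P1[OF s] by simp
  qed
qed

end
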